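(* Let $G=(V,E)$ be a finite, connected, non-complete undirected graph, and let $P$ be the distribution of a random vector $\mathbf X=(X_\alpha)_{\alpha\in V}$ that is perfectly Markov to $G$. Assume $d_2(G)\le |V|-2$. Then there exists $k\in\{1,\dots,|V|-2\}$ such that $d_2(G_k)\le k$ and $G=G_k$, where $G_k$ is the $k$-graph of $P$.
   Context: For a vertex $\alpha$, $d(\alpha\mid G)$ is the number of neighbours of $\alpha$ in $G$. The degree two of $\alpha$ is $d_2(\alpha\mid G)=|\{\gamma:\gamma\text{ adjacent to }\alpha,\ d(\gamma\mid G)\ge2\}|$, and $d_2(G)=\max_{\alpha\in V}d_2(\alpha\mid G)$. A set $S$ separates disjoint nonempty vertex sets $A,B$ in $G$ if every path from $A$ to $B$ meets $S$. Write $\mathbf X_S=(X_\gamma)_{\gamma\in S}$. $P$ satisfies the global Markov property w.r.t. $G$ if, for all disjoint $A,B,S\subseteq V$ with $A,B$ nonempty, $S$ separating $A,B$ implies $\mathbf X_A\perp\!\!\!\perp\mathbf X_B\mid\mathbf X_S$. $P$ is perfectly Markov to $G$ if it satisfies the global Markov property and, for all disjoint nonempty $A,B,S\subseteq V$, $\mathbf X_A\perp\!\!\!\perp\mathbf X_B\mid\mathbf X_S$ implies that $S$ separates $A$ and $B$ in $G$. For $k\in\{0,\dots,|V|-2\}$, the $k$-graph $G_k=(V,E_k)$ has distinct $\alpha,\beta$ non-adjacent iff there exists $S\subseteq V\setminus\{\alpha,\beta\}$ with $|S|=k$ and $X_\alpha\perp\!\!\!\perp X_\beta\mid\mathbf X_S$.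 *)

theory Defs
  imports "HOL-Probability.Probability"
begin

definition ugraph :: "'v set \<Rightarrow> ('v \<Rightarrow> 'v \<Rightarrow> bool) \<Rightarrow> bool" where
  "ugraph V E \<longleftrightarrow> finite V \<and> (\<forall>x y. E x y \<longrightarrow> x \<in> V \<and> y \<in> V \<and> x \<noteq> y \<and> E y x)"

definition connected_graph :: "'v set \<Rightarrow> ('v \<Rightarrow> 'v \<Rightarrow> bool) \<Rightarrow> bool" where
  "connected_graph V E \<longleftrightarrow> V \<noteq> {} \<and> (\<forall>x\<in>V. \<forall>y\<in>V. E\<^sup>*\<^sup>* x y)"

definition complete_graph :: "'v set \<Rightarrow> ('v \<Rightarrow> 'v \<Rightarrow> bool) \<Rightarrow> bool" where
  "complete_graph V E \<longleftrightarrow> (\<forall>x\<in>V. \<forall>y\<in>V. x \<noteq> y \<longrightarrow> E x y)"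

definition deg :: "'v set \<Rightarrow> ('v \<Rightarrow> 'v \<Rightarrow> bool) \<Rightarrow> 'v \<Rightarrow> nat" where
  "deg V E a = card {g \<in> V. E a g}"

definition deg2 :: "'v set \<Rightarrow> ('v \<Rightarrow> 'v \<Rightarrow> bool) \<Rightarrow> 'v \<Rightarrow> nat" where
  "deg2 V E a = card {g \<in> V. E a g \<and> deg V E g \<ge> 2}"

definition max_deg2 :: "'v set \<Rightarrow> ('v \<Rightarrow> 'v \<Rightarrow> bool) \<Rightarrow> nat" where
  "max_deg2 V E = Max (deg2 V E ` V)"

definition is_path :: "('v \<Rightarrow> 'v \<Rightarrow> bool) \<Rightarrow> 'v list \<Rightarrow> bool" where
  "is_path E p \<longleftrightarrow> p \<noteq> [] \<and> (\<forall>i. Suc i < length p \<longrightarrow> E (p ! i) (p ! Suc i))"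

definition separates :: "('v \<Rightarrow> 'v \<Rightarrow> bool) \<Rightarrow> 'v set \<Rightarrow> 'v set \<Rightarrow> 'v set \<Rightarrow> bool" where
  "separates E S A B \<longleftrightarrow>
     (\<forall>p. is_path E p \<and> hd p \<in> A \<and> last p \<in> B \<longrightarrow> set p \<inter> S \<noteq> {})"

definition vec_algebra ::
  "'a measure \<Rightarrow> ('v \<Rightarrow> 'b measure) \<Rightarrow> ('v \<Rightarrow> 'a \<Rightarrow> 'b) \<Rightarrow> 'v set \<Rightarrow> 'a measure" where
  "vec_algebra M N X S = vimage_algebra (space M) (\<lambda>w. restrict (\<lambda>g. X g w) S) (PiM S N)"

definition cond_indep ::
  "'a measure \<Rightarrow> ('v \<Rightarrow> 'b measure) \<Rightarrow> ('v \<Rightarrow> 'a \<Rightarrow> 'b) \<Rightarrow> 'v set \<Rightarrow> 'v set \<Rightarrow> 'v set \<Rightarrow> bool" where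
  "cond_indep M N X A B S \<longleftrightarrow>
     (\<forall>a \<in> sets (vec_algebra M N X A). \<forall>b \<in> sets (vec_algebra M N X B).
        AE w in M. real_cond_exp M (vec_algebra M N X S) (indicator (a \<inter> b)) w
                 = real_cond_exp M (vec_algebra M N X S) (indicator a) w *
                   real_cond_exp M (vec_algebra M N X S) (indicator b) w)"

definition global_markov ::
  "'v set \<Rightarrow> ('v \<Rightarrow> 'v \<Rightarrow> bool) \<Rightarrow> 'a measure \<Rightarrow> ('v \<Rightarrow> 'b measure) \<Rightarrow> ('v \<Rightarrow> 'a \<Rightarrow> 'b) \<Rightarrow> bool" where
  "global_markov V E M N X \<longleftrightarrow>
     (\<forall>A B S. A \<subseteq> V \<and> B \<subseteq> V \<and> S \<subseteq> V \<and> A \<noteq> {} \<and> B \<noteq> {} \<and>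
        A \<inter> B = {} \<and> A \<inter> S = {} \<and> B \<inter> S = {} \<and> separates E S A B
        \<longrightarrow> cond_indep M N X A B S)"

definition perfectly_markov ::
  "'v set \<Rightarrow> ('v \<Rightarrow> 'v \<Rightarrow> bool) \<Rightarrow> 'a measure \<Rightarrow> ('v \<Rightarrow> 'b measure) \<Rightarrow> ('v \<Rightarrow> 'a \<Rightarrow> 'b) \<Rightarrow> bool" where
  "perfectly_markov V E M N X \<longleftrightarrow> global_markov V E M N X \<and>
     (\<forall>A B S. A \<subseteq> V \<and> B \<subseteq> V \<and> S \<subseteq> V \<and> A \<noteq> {} \<and> B \<noteq> {} \<and> S \<noteq> {} \<and>
        A \<inter> B = {} \<and> A \<inter> S = {} \<and> B \<inter> S = {} \<and> cond_indep M N X A B S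
        \<longrightarrow> separates E S A B)"

definition kgraph ::
  "'v set \<Rightarrow> 'a measure \<Rightarrow> ('v \<Rightarrow> 'b measure) \<Rightarrow> ('v \<Rightarrow> 'a \<Rightarrow> 'b) \<Rightarrow> nat \<Rightarrow> 'v \<Rightarrow> 'v \<Rightarrow> bool" where
  "kgraph V M N X k a b \<longleftrightarrow> a \<in> V \<and> b \<in> V \<and> a \<noteq> b \<and>
     \<not> (\<exists>S. S \<subseteq> V - {a, b} \<and> card S = k \<and> cond_indep M N X {a} {b} S)"

end

theory Submission
  imports Defs
begin

lemma pad_subset:
  assumes "finite T" "D \<subseteq> T" "card D \<le> k" "k \<le> card T"
  shows "\<exists>S. D \<subseteq> S \<and> S \<subseteq> T \<and> card S = k"
proof -
  have "card (T - D) = card T - card D" using assms by (simp add: card_Diff_subset finite_subset)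
  then obtain R where R: "R \<subseteq> T - D" "card R = k - card D"
    using obtain_subset_with_card_n[of "k - card D" "T - D"] assms by force
  have fD: "finite D" using assms finite_subset by blast
  have fR: "finite R" using R assms finite_subset by (meson finite_Diff)
  have "card (D \<union> R) = card D + card R" using R fD fR by (intro card_Un_disjoint) auto
  then show ?thesis using R assms by (intro exI[of _ "D \<union> R"]) auto
qed

lemma sep_lemma:
  assumes ug: "ugraph V E" and aV: "a \<in> V" and ab: "a \<noteq> b" "\<not> E a b"
    and p: "is_path E p" "hd p = a" "last p = b"
  shows "set p \<inter> {g \<in> V. E a g \<and> deg V E g \<ge> 2} \<noteq> {}"
proof -
  have ne: "p \<noteq> []" using p unfolding is_path_def by auto
  define J where "J = {j. j < length p \<and> p ! j = a}"
  have J0: "0 \<in> J" using ne p by (simp add: J_def hd_conv_nth)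
  have fJ: "finite J" unfolding J_def by auto
  define i where "i = Max J"
  have iJ: "i \<in> J" using J0 fJ i_def Max_in by blast
  have imax: "\<And>j. j < length p \<Longrightarrow> p ! j = a \<Longrightarrow> j \<le> i"
    using fJ i_def J_def by auto
  have lastidx: "p ! (length p - 1) = b" using p ne by (simp add: last_conv_nth)
  have ilen: "i < length p" "p ! i = a" using iJ J_def by auto
  have "i \<noteq> length p - 1" using lastidx ilen ab by auto
  hence i1: "Suc i < length p" using ilen by auto
  define c where "c = p ! Suc i"
  have Eac: "E a c" using p(1) i1 ilen unfolding is_path_def c_def by auto
  have cV: "c \<in> V" and ca: "c \<noteq> a" and Eca: "E c a" using ug Eac unfolding ugraph_def by auto
  have "c \<noteq> b" using Eac ab by auto
  hence "Suc i \<noteq> length p - 1" using lastidx c_def by auto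
  hence i2: "Suc (Suc i) < length p" using i1 by auto
  define d where "d = p ! Suc (Suc i)"
  have Ecd: "E c d" using p(1) i2 unfolding is_path_def c_def d_def by auto
  have "d \<noteq> a" using imax[of "Suc (Suc i)"] i2 d_def by auto
  moreover have "d \<in> V" using ug Ecd unfolding ugraph_def by auto
  moreover have fin: "finite V" using ug unfolding ugraph_def by auto
  ultimately have "card {a, d} \<le> card {g \<in> V. E c g}"
    using aV Eca Ecd by (intro card_mono) auto
  moreover have "card {a, d} = 2" using \<open>d \<noteq> a\<close> by auto
  ultimately have "deg V E c \<ge> 2" unfolding deg_def by auto
  moreover have "c \<in> set p" using i1 c_def by auto
  ultimately show ?thesis using cV Eac by auto
qed

theorem corollary9:
  fixes V :: "'v set" and E :: "'v \<Rightarrow> 'v \<Rightarrow> bool"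
    and M :: "'a measure" and N :: "'v \<Rightarrow> 'b measure" and X :: "'v \<Rightarrow> 'a \<Rightarrow> 'b"
  assumes "ugraph V E"
    and "connected_graph V E"
    and "\<not> complete_graph V E"
    and "prob_space M"
    and "\<And>g. g \<in> V \<Longrightarrow> X g \<in> measurable M (N g)"
    and "perfectly_markov V E M N X"
    and "max_deg2 V E \<le> card V - 2"
  shows "\<exists>k \<in> {1..card V - 2}. max_deg2 V (kgraph V M N X k) \<le> k \<and> E = kgraph V M N X k"
proof -
  note ug = assms(1)
  have fin: "finite V" using ug unfolding ugraph_def by auto
  obtain a0 b0 where ab0: "a0 \<in> V" "b0 \<in> V" "a0 \<noteq> b0" "\<not> E a0 b0"
    using assms(3) unfolding complete_graph_def by auto
  have "E\<^sup>*\<^sup>* a0 b0" using assms(2) ab0 unfolding connected_graph_def by auto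
  then obtain c0 where c0: "E a0 c0" "E\<^sup>*\<^sup>* c0 b0"
    using ab0(3) by (metis converse_rtranclpE)
  have c0V: "c0 \<in> V" "c0 \<noteq> a0" using ug c0 unfolding ugraph_def by auto
  have "c0 \<noteq> b0" using c0 ab0 by auto
  hence "card {a0, b0, c0} = 3" using ab0 c0V by auto
  moreover have "card {a0, b0, c0} \<le> card V" using fin ab0 c0V by (intro card_mono) auto
  ultimately have V3: "card V \<ge> 3" by auto
  define k where "k = max 1 (max_deg2 V E)"
  have k1: "k \<in> {1..card V - 2}" using V3 assms(7) k_def by auto
  have GM: "global_markov V E M N X" and PM2:
    "\<And>A B S. A \<subseteq> V \<Longrightarrow> B \<subseteq> V \<Longrightarrow> S \<subseteq> V \<Longrightarrow> A \<noteq> {} \<Longrightarrow> B \<noteq> {} \<Longrightarrow> S \<noteq> {} \<Longrightarrow>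
        A \<inter> B = {} \<Longrightarrow> A \<inter> S = {} \<Longrightarrow> B \<inter> S = {} \<Longrightarrow> cond_indep M N X A B S
        \<Longrightarrow> separates E S A B"
    using assms(6) unfolding perfectly_markov_def by blast+
  have GM': "cond_indep M N X A B S" if "A \<subseteq> V" "B \<subseteq> V" "S \<subseteq> V" "A \<noteq> {}" "B \<noteq> {}"
    "A \<inter> B = {}" "A \<inter> S = {}" "B \<inter> S = {}" "separates E S A B" for A B S
    by (rule GM[unfolded global_markov_def, THEN spec[of _ A], THEN spec[of _ B], THEN spec[of _ S], THEN mp])
      (intro conjI that)
  have eq: "E = kgraph V M N X k"
  proof (intro ext iffI)
    fix a b assume Eab: "E a b"
    have abV: "a \<in> V" "b \<in> V" "a \<noteq> b" using ug Eab unfolding ugraph_def by auto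
    show "kgraph V M N X k a b" unfolding kgraph_def
    proof (intro conjI abV notI)
      assume "\<exists>S. S \<subseteq> V - {a, b} \<and> card S = k \<and> cond_indep M N X {a} {b} S"
      then obtain S where S: "S \<subseteq> V - {a, b}" "card S = k" "cond_indep M N X {a} {b} S" by auto
      have "S \<noteq> {}" using S k1 by auto
      hence "separates E S {a} {b}" using PM2[of "{a}" "{b}" S] S abV by auto
      moreover have "is_path E [a, b]" using Eab unfolding is_path_def
        by (auto simp: less_Suc_eq)
      ultimately have "set [a, b] \<inter> S \<noteq> {}" unfolding separates_def by fastforce
      thus False using S by auto
    qed
  next
    fix a b assume kab: "kgraph V M N X k a b"
    hence abV: "a \<in> V" "b \<in> V" "a \<noteq> b" unfolding kgraph_def by auto
    show "E a b"
    proof (rule ccontr)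
      assume nE: "\<not> E a b"
      define D where "D = {g \<in> V. E a g \<and> deg V E g \<ge> 2}"
      have "card D = deg2 V E a" unfolding D_def deg2_def by simp
      also have "\<dots> \<le> max_deg2 V E" unfolding max_deg2_def using fin abV by auto
      finally have Dk: "card D \<le> k" unfolding k_def by auto
      have DT: "D \<subseteq> V - {a, b}" using ug nE unfolding D_def ugraph_def by auto
      have "card (V - {a, b}) = card V - 2" using abV fin by auto
      hence "k \<le> card (V - {a, b})" using k1 by auto
      then obtain S where S: "D \<subseteq> S" "S \<subseteq> V - {a, b}" "card S = k"
        using pad_subset[OF _ DT Dk] fin by auto
      have sep: "separates E S {a} {b}" unfolding separates_def
      proof (intro allI impI)
        fix p assume "is_path E p \<and> hd p \<in> {a} \<and> last p \<in> {b}"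
        then show "set p \<inter> S \<noteq> {}" using sep_lemma[OF ug abV(1) abV(3) nE, of p] S(1)
          unfolding D_def by auto
      qed
      have "cond_indep M N X {a} {b} S"
      proof -
        have "S \<subseteq> V" "{a} \<inter> S = {}" "{b} \<inter> S = {}" using S by auto
        moreover have "{a} \<subseteq> V" "{b} \<subseteq> V" "{a} \<inter> {b} = {}" "{a} \<noteq> {}" "{b} \<noteq> {}" using abV by auto
        ultimately show ?thesis by (intro GM' sep)
      qed
      thus False using kab S unfolding kgraph_def by auto
    qed
  qed
  have m: "max_deg2 V E \<le> k" unfolding k_def by simp
  show ?thesis
    by (intro bexI[OF _ k1] conjI) (simp_all only: eq[symmetric] m refl simp_thms)
qed

end
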